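(* Let $E_0\subset D(0,1)\setminus\{0\}$, $E_\infty\subset\mathbb{C}\setminus\overline{D}(0,1)$ be finite and let $\widetilde a\in\Sigma_0\setminus\widetilde{E_0}$. The natural transformation $\Gamma_{0,\widetilde a}$ given on objects of $\mathcal{C}_{E_0,E_\infty}$ by $(A_0,A_1,A_\infty,\widetilde{M_0},\widetilde{M_\infty})\mapsto\widetilde{M_0}(\widetilde a)$ is an isomorphism of tensor functors from $\omega_0$ to $\omega_1^{(\widetilde a)}$, i.e. an element of $\mathrm{Iso}^\otimes(\omega_0,\omega_1^{(\widetilde a)})$.
   Context: Fix an integer $p\ge2$. Let $\widetilde{\mathbb{C}^\star}=\{(re^{ib},b): r>0, b\in\mathbb{R}\}$, $\widetilde1=(1,0)$, $\widetilde{\log}(re^{ib},b)=\log r+ib$, $\pi=\exp\circ\widetilde{\log}$, $\phi_p(re^{ib},b)=(r^pe^{ipb},pb)$; $\phi_p(W)=W\circ\phi_p$, $\pi^\star W=W\circ\pi$. $\Sigma_0=\{(re^{ib},b):0<r<1\}$, $\Sigma_\infty=\{(re^{ib},b):r>1\}$. Objects of the category $\mathcal{C}$ of rank $n$: tuples $(A_0,A_1,A_\infty,\widetilde{M_0},\widetilde{M_\infty})$ with $A_i\in GL_n(\mathbb{C})$, $\widetilde{M_0}\in GL_n(\mathcal{M}(\Sigma_0))$, $\widetilde{M_\infty}\in GL_n(\mathcal{M}(\Sigma_\infty))$, $\phi_p(\widetilde{M_0})=A_1\widetilde{M_0}A_0^{-1}$, $\phi_p(\widetilde{M_\infty})=A_1\widetilde{M_\infty}A_\infty^{-1}$,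 such that there are $\widetilde{W_1}\in GL_n(\mathcal{M}(\widetilde{\mathbb{C}^\star}))$, $W_0\in GL_n(\mathcal{M}(D(0,1)))$, $W_\infty\in GL_n(\mathcal{M}(\mathbb{P}^1(\mathbb{C})\setminus\overline{D}(0,1)))$ with $\widetilde{W_1}\widetilde{M_0}=\pi^\star W_0$, $\widetilde{W_1}\widetilde{M_\infty}=\pi^\star W_\infty$. Morphisms to $(B_0,B_1,B_\infty,\widetilde{N_0},\widetilde{N_\infty})$: triples $(S_0,\widetilde{S_1},S_\infty)$ with $S_0,S_\infty$ constant, $\widetilde{S_1}$ with entries Laurent polynomials in $\widetilde{\log}$, $S_0A_0=B_0S_0$, $\phi_p(\widetilde{S_1})A_1=B_1\widetilde{S_1}$, $S_\infty A_\infty=B_\infty S_\infty$, $\widetilde{S_1}\widetilde{M_0}=\widetilde{N_0}S_0$, $\widetilde{S_1}\widetilde{M_\infty}=\widetilde{N_\infty}S_\infty$; tensor product is componentwise Kronecker product. The fibre functors $\omega_0$ and $\omega_1^{(\widetilde a)}$ send a rank $n$ object to $\mathbb{C}^n$ and a morphism to $S_0$, resp. $\widetilde{S_1}(\widetilde a)$. For finite $E\subset\mathbb{C}^\star$, $E^{p^k}=\{z^{p^k}:z\in E\}$ ($k\ge0$), $E^{p^k}=\{z:z^{p^{-k}}\in E\}$ ($k<0$), $\widetilde E=\pi^{-1}(\bigcup_kE^{p^k})$. The singular locus $S(M)$ is the set of poles of $M$ together with zeros of $\det M$. $\mathcal{C}_{E_0,E_\infty}$ is the full subcategory of objects with $S(\widetilde{M_0})\subset\widetilde{E_0}$,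 $S(\widetilde{M_\infty})\subset\widetilde{E_\infty}$, and $\omega_0,\omega_1^{(\widetilde a)}$ are restricted to it. *)

theory Defs
  imports "HOL-Complex_Analysis.Complex_Analysis" "Jordan_Normal_Form.Determinant"
begin

text \<open>A point (r e^{ib}, b) of the universal cover of C* is encoded by its
  tilde-log coordinate w = log r + i b, a bijection onto the complex plane. Under this
  encoding: pi = exp, phi_p acts by w |-> p w, tilde-log is the identity,
  Sigma_0 = {Re w < 0}, Sigma_infinity = {Re w > 0}, tilde-1 = 0.\<close>

definition Sigma0 :: "complex set" where "Sigma0 = {w. Re w < 0}"
definition SigmaInf :: "complex set" where "SigmaInf = {w. Re w > 0}"

definition Epow :: "complex set \<Rightarrow> nat \<Rightarrow> int \<Rightarrow> complex set" where
  "Epow E p k = (if k \<ge> 0 then (\<lambda>z. z ^ (p ^ nat k)) ` E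
                 else {z. z ^ (p ^ nat (- k)) \<in> E})"

definition Etil :: "complex set \<Rightarrow> nat \<Rightarrow> complex set" where
  "Etil E p = {w. exp w \<in> (\<Union>k. Epow E p k)}"

text \<open>Kronecker product of matrices (identification C^n (x) C^m = C^{nm}).\<close>
definition kron :: "complex mat \<Rightarrow> complex mat \<Rightarrow> complex mat" where
  "kron A B = mat (dim_row A * dim_row B) (dim_col A * dim_col B)
     (\<lambda>(i, j). A $$ (i div dim_row B, j div dim_col B) * B $$ (i mod dim_row B, j mod dim_col B))"

text \<open>Matrix-valued functions; P is the predicate "meromorphic function on the domain"
  applied entrywise, U is the (finite part of the) domain on which equalities of
  meromorphic functions are tested (equality off a sparse set = equality in M(U)).\<close>
definition mero_eq :: "complex set \<Rightarrow> (complex \<Rightarrow> complex mat) \<Rightarrow> (complex \<Rightarrow> complex mat) \<Rightarrow> bool" where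
  "mero_eq U F G \<longleftrightarrow> {w \<in> U. F w \<noteq> G w} sparse_in U"

definition mat_fun :: "((complex \<Rightarrow> complex) \<Rightarrow> bool) \<Rightarrow> nat \<Rightarrow> nat \<Rightarrow> (complex \<Rightarrow> complex mat) \<Rightarrow> bool" where
  "mat_fun P n m M \<longleftrightarrow> (\<forall>w. M w \<in> carrier_mat n m) \<and> (\<forall>i<n. \<forall>j<m. P (\<lambda>w. M w $$ (i, j)))"

definition mero_GL :: "((complex \<Rightarrow> complex) \<Rightarrow> bool) \<Rightarrow> complex set \<Rightarrow> nat \<Rightarrow> (complex \<Rightarrow> complex mat) \<Rightarrow> bool" where
  "mero_GL P U n M \<longleftrightarrow> mat_fun P n n M \<and>
     (\<exists>N. mat_fun P n n N \<and> mero_eq U (\<lambda>w. M w * N w) (\<lambda>_. 1\<^sub>m n)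
                          \<and> mero_eq U (\<lambda>w. N w * M w) (\<lambda>_. 1\<^sub>m n))"

definition mero_Sigma0 :: "(complex \<Rightarrow> complex) \<Rightarrow> bool" where
  "mero_Sigma0 f \<longleftrightarrow> f nicely_meromorphic_on Sigma0"
definition mero_SigmaInf :: "(complex \<Rightarrow> complex) \<Rightarrow> bool" where
  "mero_SigmaInf f \<longleftrightarrow> f nicely_meromorphic_on SigmaInf"
definition mero_cover :: "(complex \<Rightarrow> complex) \<Rightarrow> bool" where
  "mero_cover f \<longleftrightarrow> f nicely_meromorphic_on UNIV"
definition mero_disc :: "(complex \<Rightarrow> complex) \<Rightarrow> bool" where
  "mero_disc f \<longleftrightarrow> f nicely_meromorphic_on ball 0 1"
text \<open>Meromorphic on P^1(C) minus the closed unit disc (including the point at infinity).\<close>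
definition mero_outside :: "(complex \<Rightarrow> complex) \<Rightarrow> bool" where
  "mero_outside f \<longleftrightarrow> f nicely_meromorphic_on {z. 1 < norm z} \<and> (\<lambda>z. f (inverse z)) meromorphic_on {0}"

type_synonym obj = "complex mat \<times> complex mat \<times> complex mat \<times> (complex \<Rightarrow> complex mat) \<times> (complex \<Rightarrow> complex mat)"
type_synonym mor = "complex mat \<times> (complex \<Rightarrow> complex mat) \<times> complex mat"

definition is_obj :: "nat \<Rightarrow> nat \<Rightarrow> obj \<Rightarrow> bool" where
  "is_obj p n X \<longleftrightarrow> (case X of (A0, A1, Ai, M0, Mi) \<Rightarrow>
     A0 \<in> carrier_mat n n \<and> A1 \<in> carrier_mat n n \<and> Ai \<in> carrier_mat n n \<and>
     invertible_mat A0 \<and> invertible_mat A1 \<and> invertible_mat Ai \<and>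
     mero_GL mero_Sigma0 Sigma0 n M0 \<and> mero_GL mero_SigmaInf SigmaInf n Mi \<and>
     mero_eq Sigma0 (\<lambda>w. M0 (of_nat p * w) * A0) (\<lambda>w. A1 * M0 w) \<and>
     mero_eq SigmaInf (\<lambda>w. Mi (of_nat p * w) * Ai) (\<lambda>w. A1 * Mi w) \<and>
     (\<exists>W1 W0 Wi. mero_GL mero_cover UNIV n W1 \<and> mero_GL mero_disc (ball 0 1) n W0 \<and>
        mero_GL mero_outside {z. 1 < norm z} n Wi \<and>
        mero_eq Sigma0 (\<lambda>w. W1 w * M0 w) (\<lambda>w. W0 (exp w)) \<and>
        mero_eq SigmaInf (\<lambda>w. W1 w * Mi w) (\<lambda>w. Wi (exp w))))"

definition sing_locus :: "complex set \<Rightarrow> nat \<Rightarrow> (complex \<Rightarrow> complex mat) \<Rightarrow> complex set" where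
  "sing_locus U n M = {w \<in> U. (\<exists>i<n. \<exists>j<n. is_pole (\<lambda>z. M z $$ (i, j)) w) \<or> det (M w) = 0}"

definition in_CE :: "nat \<Rightarrow> complex set \<Rightarrow> complex set \<Rightarrow> nat \<Rightarrow> obj \<Rightarrow> bool" where
  "in_CE p E0 Ei n X \<longleftrightarrow> is_obj p n X \<and> (case X of (A0, A1, Ai, M0, Mi) \<Rightarrow>
     sing_locus Sigma0 n M0 \<subseteq> Etil E0 p \<and> sing_locus SigmaInf n Mi \<subseteq> Etil Ei p)"

text \<open>Entries that are Laurent polynomials in tilde-log (= the coordinate w).\<close>
definition laurent_poly_fun :: "(complex \<Rightarrow> complex) \<Rightarrow> bool" where
  "laurent_poly_fun f \<longleftrightarrow> (\<exists>N::int. \<exists>c::int \<Rightarrow> complex.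
      \<forall>w. w \<noteq> 0 \<longrightarrow> f w = (\<Sum>k\<in>{-N..N}. c k * w powi k))"

definition is_mor :: "nat \<Rightarrow> nat \<Rightarrow> nat \<Rightarrow> obj \<Rightarrow> obj \<Rightarrow> mor \<Rightarrow> bool" where
  "is_mor p n m X Y f \<longleftrightarrow> is_obj p n X \<and> is_obj p m Y \<and>
    (case X of (A0, A1, Ai, M0, Mi) \<Rightarrow> case Y of (B0, B1, Bi, N0, Ni) \<Rightarrow> case f of (S0, S1, Si) \<Rightarrow>
      S0 \<in> carrier_mat m n \<and> Si \<in> carrier_mat m n \<and> mat_fun laurent_poly_fun m n S1 \<and>
      S0 * A0 = B0 * S0 \<and> Si * Ai = Bi * Si \<and>
      mero_eq (UNIV - {0}) (\<lambda>w. S1 (of_nat p * w) * A1) (\<lambda>w. B1 * S1 w) \<and>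
      mero_eq Sigma0 (\<lambda>w. S1 w * M0 w) (\<lambda>w. N0 w * S0) \<and>
      mero_eq SigmaInf (\<lambda>w. S1 w * Mi w) (\<lambda>w. Ni w * Si))"

definition tensor_obj :: "obj \<Rightarrow> obj \<Rightarrow> obj" where
  "tensor_obj X Y = (case X of (A0, A1, Ai, M0, Mi) \<Rightarrow> case Y of (B0, B1, Bi, N0, Ni) \<Rightarrow>
     (kron A0 B0, kron A1 B1, kron Ai Bi, \<lambda>w. kron (M0 w) (N0 w), \<lambda>w. kron (Mi w) (Ni w)))"

definition unit_obj :: obj where
  "unit_obj = (1\<^sub>m 1, 1\<^sub>m 1, 1\<^sub>m 1, \<lambda>_. 1\<^sub>m 1, \<lambda>_. 1\<^sub>m 1)"

text \<open>Fibre functors on morphisms (on objects both give C^n).\<close>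
definition omega0 :: "mor \<Rightarrow> complex mat" where "omega0 f = fst f"
definition omega1 :: "complex \<Rightarrow> mor \<Rightarrow> complex mat" where "omega1 a f = fst (snd f) a"

definition Gamma0 :: "complex \<Rightarrow> obj \<Rightarrow> complex mat" where
  "Gamma0 a X = (case X of (A0, A1, Ai, M0, Mi) \<Rightarrow> M0 a)"

end

theory Submission
  imports Defs
begin

lemma inv_of_det:
  assumes A: "A \<in> carrier_mat n n" and d: "det A \<noteq> (0::complex)"
  shows "invertible_mat A"
proof -
  from det_non_zero_imp_unit[OF A d, of "()"] obtain B where
    "B \<in> carrier_mat n n" "B * A = 1\<^sub>m n" "A * B = 1\<^sub>m n"
    unfolding Units_def ring_mat_def by auto
  then show ?thesis unfolding invertible_mat_def inverts_mat_def using A by auto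
qed

lemma lp_cont:
  assumes "laurent_poly_fun f" "a \<noteq> 0"
  shows "f \<midarrow>a\<rightarrow> f a"
proof -
  obtain N c where fe: "\<And>w. w \<noteq> 0 \<Longrightarrow> f w = (\<Sum>k\<in>{-N..N}. c k * w powi k)"
    using assms(1) unfolding laurent_poly_fun_def by blast
  let ?g = "\<lambda>w. (\<Sum>k\<in>{-N..N}. c k * w powi k)"
  have "isCont ?g a" using assms(2) by (intro continuous_intros) auto
  then have "?g \<midarrow>a\<rightarrow> ?g a" by (simp add: isCont_def)
  moreover have "eventually (\<lambda>w. ?g w = f w) (at a)"
    using eventually_neq_at_within[of 0 a UNIV] by eventually_elim (simp add: fe)
  ultimately have "f \<midarrow>a\<rightarrow> ?g a" by (rule Lim_transform_eventually)
  then show ?thesis using fe[OF assms(2)] by simp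
qed

lemma mult_entry:
  assumes "A \<in> carrier_mat m n" "B \<in> carrier_mat n q" "i < m" "j < q"
  shows "(A * B) $$ (i, j) = (\<Sum>k<n. A $$ (i, k) * B $$ (k, j))"
  using assms by (auto simp: scalar_prod_def lessThan_atLeast0 intro!: sum.cong)

lemma open_Sigma0: "open Sigma0"
  unfolding Sigma0_def by (rule open_halfspace_Re_lt)

lemma part2:
  assumes X: "in_CE p E0 Ei n X" and Y: "in_CE p E0 Ei m Y" and f: "is_mor p n m X Y f"
    and a: "a \<in> Sigma0 - Etil E0 p"
  shows "omega1 a f * Gamma0 a X = Gamma0 a Y * omega0 f"
proof -
  obtain A0 A1 Ai M0 Mi where Xd: "X = (A0, A1, Ai, M0, Mi)" by (cases X) auto
  obtain B0 B1 Bi N0 Ni where Yd: "Y = (B0, B1, Bi, N0, Ni)" by (cases Y) auto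
  obtain S0 S1 Si where fd: "f = (S0, S1, Si)" by (cases f) auto
  note X' = X[unfolded in_CE_def is_obj_def Xd, simplified]
  note Y' = Y[unfolded in_CE_def is_obj_def Yd, simplified]
  note f' = f[unfolded is_mor_def Xd Yd fd, simplified]
  have aS: "a \<in> Sigma0" and aE: "a \<notin> Etil E0 p" using a by auto
  have a0: "a \<noteq> 0" using aS by (auto simp: Sigma0_def)
  have M0c: "\<And>w. M0 w \<in> carrier_mat n n" and M0m: "\<And>i j. i<n \<Longrightarrow> j<n \<Longrightarrow> mero_Sigma0 (\<lambda>w. M0 w $$ (i, j))"
    using X' unfolding mero_GL_def mat_fun_def by auto
  have N0c: "\<And>w. N0 w \<in> carrier_mat m m" and N0m: "\<And>i j. i<m \<Longrightarrow> j<m \<Longrightarrow> mero_Sigma0 (\<lambda>w. N0 w $$ (i, j))"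
    using Y' unfolding mero_GL_def mat_fun_def by auto
  have S1c: "\<And>w. S1 w \<in> carrier_mat m n" and S1m: "\<And>i j. i<m \<Longrightarrow> j<n \<Longrightarrow> laurent_poly_fun (\<lambda>w. S1 w $$ (i, j))"
    using f' unfolding mat_fun_def by auto
  have S0c: "S0 \<in> carrier_mat m n" using f' by auto
  have meq: "mero_eq Sigma0 (\<lambda>w. S1 w * M0 w) (\<lambda>w. N0 w * S0)" using f' by auto
  have Mnp: "\<And>i j. i<n \<Longrightarrow> j<n \<Longrightarrow> \<not> is_pole (\<lambda>z. M0 z $$ (i, j)) a"
    using X' aS aE unfolding sing_locus_def by blast
  have Nnp: "\<And>i j. i<m \<Longrightarrow> j<m \<Longrightarrow> \<not> is_pole (\<lambda>z. N0 z $$ (i, j)) a"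
    using Y' aS aE unfolding sing_locus_def by blast
  have Mt: "\<And>i j. i<n \<Longrightarrow> j<n \<Longrightarrow> (\<lambda>z. M0 z $$ (i, j)) \<midarrow>a\<rightarrow> M0 a $$ (i, j)"
    using M0m Mnp aS unfolding mero_Sigma0_def nicely_meromorphic_on_def by blast
  have Nt: "\<And>i j. i<m \<Longrightarrow> j<m \<Longrightarrow> (\<lambda>z. N0 z $$ (i, j)) \<midarrow>a\<rightarrow> N0 a $$ (i, j)"
    using N0m Nnp aS unfolding mero_Sigma0_def nicely_meromorphic_on_def by blast
  have St: "\<And>i j. i<m \<Longrightarrow> j<n \<Longrightarrow> (\<lambda>z. S1 z $$ (i, j)) \<midarrow>a\<rightarrow> S1 a $$ (i, j)"
    using S1m a0 lp_cont by blast
  have ev: "eventually (\<lambda>w. S1 w * M0 w = N0 w * S0) (at a)"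
  proof -
    have "eventually (\<lambda>w. w \<notin> {w \<in> Sigma0. S1 w * M0 w \<noteq> N0 w * S0}) (at a)"
      using meq aS unfolding mero_eq_def sparse_in_eventually_iff[OF open_Sigma0] by blast
    moreover have "eventually (\<lambda>w. w \<in> Sigma0) (at a)"
      using open_Sigma0 aS eventually_at_topological by blast
    ultimately show ?thesis by eventually_elim auto
  qed
  have "S1 a * M0 a = N0 a * S0"
  proof (rule eq_matI)
    fix i j assume ij: "i < dim_row (N0 a * S0)" "j < dim_col (N0 a * S0)"
    then have i: "i < m" and j: "j < n" using N0c[of a] S0c by auto
    have e1: "\<And>w. (S1 w * M0 w) $$ (i, j) = (\<Sum>k<n. S1 w $$ (i, k) * M0 w $$ (k, j))"
      using mult_entry[OF S1c M0c i j] .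
    have e2: "\<And>w. (N0 w * S0) $$ (i, j) = (\<Sum>k<m. N0 w $$ (i, k) * S0 $$ (k, j))"
      using mult_entry[OF N0c S0c i j] .
    have t1: "(\<lambda>w. (S1 w * M0 w) $$ (i, j)) \<midarrow>a\<rightarrow> (S1 a * M0 a) $$ (i, j)"
      unfolding e1 using i j St Mt by (intro tendsto_intros) auto
    have t2: "(\<lambda>w. (N0 w * S0) $$ (i, j)) \<midarrow>a\<rightarrow> (N0 a * S0) $$ (i, j)"
      unfolding e2 using i j Nt by (intro tendsto_intros) auto
    have ev2: "eventually (\<lambda>w. (S1 w * M0 w) $$ (i, j) = (N0 w * S0) $$ (i, j)) (at a)"
      using ev by eventually_elim simp
    have t1': "(\<lambda>w. (N0 w * S0) $$ (i, j)) \<midarrow>a\<rightarrow> (S1 a * M0 a) $$ (i, j)"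
      using Lim_transform_eventually[OF t1 ev2] .
    show "(S1 a * M0 a) $$ (i, j) = (N0 a * S0) $$ (i, j)"
      using tendsto_unique[OF at_neq_bot t1' t2] .
  next
    show "dim_row (S1 a * M0 a) = dim_row (N0 a * S0)" using S1c[of a] N0c[of a] by auto
    show "dim_col (S1 a * M0 a) = dim_col (N0 a * S0)" using M0c[of a] S0c by auto
  qed
  then show ?thesis by (simp add: omega1_def omega0_def Gamma0_def Xd Yd fd)
qed

lemma part1:
  assumes X: "in_CE p E0 Ei n X" and a: "a \<in> Sigma0 - Etil E0 p"
  shows "Gamma0 a X \<in> carrier_mat n n \<and> invertible_mat (Gamma0 a X)"
proof -
  obtain A0 A1 Ai M0 Mi where Xd: "X = (A0, A1, Ai, M0, Mi)" by (cases X) auto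
  note X' = X[unfolded in_CE_def is_obj_def Xd, simplified]
  have M0c: "\<And>w. M0 w \<in> carrier_mat n n"
    using X' unfolding mero_GL_def mat_fun_def by auto
  have "det (M0 a) \<noteq> 0" using X' a unfolding sing_locus_def by blast
  then show ?thesis using M0c inv_of_det[OF M0c] by (simp add: Gamma0_def Xd)
qed

theorem mainTheorem11:
  fixes p :: nat and E0 Ei :: "complex set" and a :: complex
  assumes "p \<ge> 2"
    and "finite E0" and "E0 \<subseteq> ball 0 1 - {0}"
    and "finite Ei" and "Ei \<subseteq> - cball 0 1"
    and "a \<in> Sigma0 - Etil E0 p"
  shows "(\<forall>n X. in_CE p E0 Ei n X \<longrightarrow>
            Gamma0 a X \<in> carrier_mat n n \<and> invertible_mat (Gamma0 a X))
       \<and> (\<forall>n m X Y f. in_CE p E0 Ei n X \<and> in_CE p E0 Ei m Y \<and> is_mor p n m X Y f \<longrightarrow>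
            omega1 a f * Gamma0 a X = Gamma0 a Y * omega0 f)
       \<and> (\<forall>n m X Y. in_CE p E0 Ei n X \<and> in_CE p E0 Ei m Y \<longrightarrow>
            Gamma0 a (tensor_obj X Y) = kron (Gamma0 a X) (Gamma0 a Y))
       \<and> Gamma0 a unit_obj = 1\<^sub>m 1"
  using part1[OF _ assms(6)] part2[OF _ _ _ assms(6)]
  by (auto simp: Gamma0_def tensor_obj_def unit_obj_def split: prod.splits)

end
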